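(* Let $\epsilon=\epsilon_1\cdots\epsilon_n$ be an inversion sequence to which Algorithm A (described below) is applied, and let $\epsilon'=\epsilon'_1\cdots\epsilon'_n$ be the resulting sequence. If the entry in position $i$ is replaced during the algorithm (i.e. an assignment to $\mathrm{seq}[i]$ is made), then (i) $\epsilon_i<\epsilon_{i+1}$, and (ii) the replacement entry satisfies $\epsilon'_i<\epsilon_{i+1}$.
   Context: An inversion sequence of length $n$ is an integer sequence with $0\le\epsilon_i<i$ for all $i$. The reduction of an integer word replaces each occurrence of its $k$-th smallest distinct value by $k-1$; a consecutive pattern $\underline{p_1p_2p_3p_4}$ occurs in a sequence at position $i$ if the reduction of its entries in positions $i,\dots,i+3$ equals $p_1p_2p_3p_4$. Let $p=\underline{0102}$ and $q=\underline{0112}$. Algorithm A, on input an integer sequence $\mathrm{seq}=\epsilon_1\cdots\epsilon_n$: let $E_p$, $E_q$ be the sets of positions of occurrences of $p$, resp. $q$, in the input sequence; set $\mathrm{last}:=$ null. For $i=1,2,\dots,n$ in order: let $N_p,N_q$ be the sets of positions of occurrences of $p$, resp. $q$, in the current sequence. If $i-2\in E_p$: set $\mathrm{last}:=\mathrm{seq}[i]$ and $\mathrm{seq}[i]:=\mathrm{seq}[i-1]$. Else if $i-2\in E_q$: set $\mathrm{last}:=\mathrm{seq}[i]$ and $\mathrm{seq}[i]:=\mathrm{seq}[i-2]$. Else if $i-2\in N_p$ or $i-2\in N_q$: swap the values of $\mathrm{seq}[i]$ and $\mathrm{last}$. Output $\mathrm{seq}$. *)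

theory Defs
  imports Main
begin

text \<open>Sequences are lists of naturals; positions are 1-based: the entry at
position i of xs is xs ! (i - 1).\<close>

definition entry :: "nat list \<Rightarrow> nat \<Rightarrow> nat" where
  "entry xs i = xs ! (i - 1)"

definition inversion_seq :: "nat list \<Rightarrow> bool" where
  "inversion_seq xs \<longleftrightarrow> (\<forall>i\<in>{1..length xs}. entry xs i < i)"

definition reduction :: "nat list \<Rightarrow> nat list" where
  "reduction w = map (\<lambda>x. card {y \<in> set w. y < x}) w"

definition occurs_at :: "nat list \<Rightarrow> nat list \<Rightarrow> nat \<Rightarrow> bool" where
  "occurs_at pat xs i \<longleftrightarrow> 1 \<le> i \<and> i + 3 \<le> length xs \<and>
     reduction (take 4 (drop (i - 1) xs)) = pat"

definition pat_p :: "nat list" where "pat_p = [0,1,0,2]"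
definition pat_q :: "nat list" where "pat_q = [0,1,1,2]"

text \<open>State of Algorithm A: current sequence, register last (None = null),
and the set of positions to which an assignment has been made.
One step of the loop for index i; eps is the input sequence (for E_p, E_q).\<close>
definition algA_step ::
  "nat list \<Rightarrow> nat \<Rightarrow> nat list \<times> nat option \<times> nat set \<Rightarrow> nat list \<times> nat option \<times> nat set" where
  "algA_step eps i st = (case st of (s, lst, A) \<Rightarrow>
     if i \<ge> 3 \<and> occurs_at pat_p eps (i - 2) then
       (s[i - 1 := entry s (i - 1)], Some (entry s i), insert i A)
     else if i \<ge> 3 \<and> occurs_at pat_q eps (i - 2) then
       (s[i - 1 := entry s (i - 2)], Some (entry s i), insert i A)
     else if i \<ge> 3 \<and> (occurs_at pat_p s (i - 2) \<or> occurs_at pat_q s (i - 2)) then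
       (s[i - 1 := the lst], Some (entry s i), insert i A)
     else (s, lst, A))"

definition algA_run :: "nat list \<Rightarrow> nat list \<times> nat option \<times> nat set" where
  "algA_run eps = fold (algA_step eps) [1..<length eps + 1] (eps, None, {})"

definition algA :: "nat list \<Rightarrow> nat list" where
  "algA eps = fst (algA_run eps)"

definition algA_assigned :: "nat list \<Rightarrow> nat set" where
  "algA_assigned eps = snd (snd (algA_run eps))"

end

theory Submission
  imports Defs
begin

definition inv :: "nat list \<Rightarrow> nat \<Rightarrow> nat list \<times> nat option \<times> nat set \<Rightarrow> bool" where
  "inv eps k st = (case st of (s, lst, A) \<Rightarrow>
     length s = length eps \<and> A \<subseteq> {1..k} \<and>
     (\<forall>m. 1 \<le> m \<longrightarrow> m \<le> length eps \<longrightarrow> m \<notin> A \<longrightarrow> entry s m = entry eps m) \<and>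
     (\<forall>j\<in>A. j + 1 \<le> length eps \<and> entry eps j < entry eps (j+1) \<and> entry s j < entry eps (j+1)) \<and>
     (A \<noteq> {} \<longrightarrow> lst = Some (entry eps (Max A))))"

lemma red_mono_less:
  fixes w :: "nat list"
  assumes "x < y" "x \<in> set w"
  shows "card {z \<in> set w. z < x} < card {z \<in> set w. z < y}"
  by (rule psubset_card_mono) (use assms in auto)

lemma red_mono_le:
  fixes w :: "nat list"
  assumes "x \<le> y"
  shows "card {z \<in> set w. z < x} \<le> card {z \<in> set w. z < y}"
  by (rule card_mono) (use assms in auto)

lemma red_p:
  fixes a b c d :: nat
  assumes "reduction [a,b,c,d] = [0,1,0,2]"
  shows "a < b \<and> c = a \<and> b < d"
proof -
  let ?f = "\<lambda>x. card {z \<in> set [a,b,c,d]. z < x}"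
  have h: "?f a = 0" "?f b = 1" "?f c = 0" "?f d = 2"
    using assms unfolding reduction_def by (simp_all del: set_simps)
  have 1: "a < b"
  proof (rule ccontr)
    assume "\<not> a < b" then have "?f b \<le> ?f a" by (intro red_mono_le) simp
    then show False using h by linarith
  qed
  have 2: "c = a"
  proof (rule ccontr)
    assume "c \<noteq> a"
    then have "c < a \<or> a < c" by arith
    then show False
    proof
      assume "c < a" then have "?f c < ?f a" by (intro red_mono_less) auto
      then show False using h by linarith
    next
      assume "a < c" then have "?f a < ?f c" by (intro red_mono_less) auto
      then show False using h by linarith
    qed
  qed
  have 3: "b < d"
  proof (rule ccontr)
    assume "\<not> b < d" then have "?f d \<le> ?f b" by (intro red_mono_le) simp
    then show False using h by linarith
  qed
  show ?thesis using 1 2 3 by simp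
qed

lemma red_q:
  fixes a b c d :: nat
  assumes "reduction [a,b,c,d] = [0,1,1,2]"
  shows "a < b \<and> c = b \<and> b < d"
proof -
  let ?f = "\<lambda>x. card {z \<in> set [a,b,c,d]. z < x}"
  have h: "?f a = 0" "?f b = 1" "?f c = 1" "?f d = 2"
    using assms unfolding reduction_def by (simp_all del: set_simps)
  have 1: "a < b"
  proof (rule ccontr)
    assume "\<not> a < b" then have "?f b \<le> ?f a" by (intro red_mono_le) simp
    then show False using h by linarith
  qed
  have 2: "c = b"
  proof (rule ccontr)
    assume "c \<noteq> b"
    then have "c < b \<or> b < c" by arith
    then show False
    proof
      assume "c < b" then have "?f c < ?f b" by (intro red_mono_less) auto
      then show False using h by linarith
    next
      assume "b < c" then have "?f b < ?f c" by (intro red_mono_less) auto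
      then show False using h by linarith
    qed
  qed
  have 3: "b < d"
  proof (rule ccontr)
    assume "\<not> b < d" then have "?f d \<le> ?f b" by (intro red_mono_le) simp
    then show False using h by linarith
  qed
  show ?thesis using 1 2 3 by simp
qed

lemma take4:
  assumes "1 \<le> j" "j + 3 \<le> length xs"
  shows "take 4 (drop (j - 1) xs) = [entry xs j, entry xs (j+1), entry xs (j+2), entry xs (j+3)]"
proof (rule nth_equalityI)
  show "length (take 4 (drop (j - 1) xs)) = length [entry xs j, entry xs (j+1), entry xs (j+2), entry xs (j+3)]"
    using assms by simp
  fix k assume "k < length (take 4 (drop (j - 1) xs))"
  then have "k < 4" by simp
  then have "k = 0 \<or> k = 1 \<or> k = 2 \<or> k = 3" by arith
  then show "take 4 (drop (j - 1) xs) ! k = [entry xs j, entry xs (j+1), entry xs (j+2), entry xs (j+3)] ! k"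
    using assms by (auto simp: entry_def)
qed

lemma occ_p:
  assumes "occurs_at pat_p xs j"
  shows "1 \<le> j \<and> j + 3 \<le> length xs \<and> entry xs j < entry xs (j+1) \<and>
    entry xs (j+2) = entry xs j \<and> entry xs (j+1) < entry xs (j+3)"
  using assms red_p[of "entry xs j" "entry xs (j+1)" "entry xs (j+2)" "entry xs (j+3)"] take4[of j xs]
  unfolding occurs_at_def pat_p_def by auto

lemma occ_q:
  assumes "occurs_at pat_q xs j"
  shows "1 \<le> j \<and> j + 3 \<le> length xs \<and> entry xs j < entry xs (j+1) \<and>
    entry xs (j+2) = entry xs (j+1) \<and> entry xs (j+1) < entry xs (j+3)"
  using assms red_q[of "entry xs j" "entry xs (j+1)" "entry xs (j+2)" "entry xs (j+3)"] take4[of j xs]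
  unfolding occurs_at_def pat_q_def by auto

lemma occ_cong:
  assumes "length s = length eps"
    and "entry s j = entry eps j" "entry s (j+1) = entry eps (j+1)"
    "entry s (j+2) = entry eps (j+2)" "entry s (j+3) = entry eps (j+3)"
  shows "occurs_at pat s j = occurs_at pat eps j"
  using assms take4[of j s] take4[of j eps] unfolding occurs_at_def by auto

lemma entry_upd:
  assumes "1 \<le> m" "1 \<le> i" "i \<le> length s"
  shows "entry (s[i - 1 := v]) m = (if m = i then v else entry s m)"
  using assms by (auto simp: entry_def nth_list_update)

lemma inv_modify:
  assumes I: "inv eps k (s, lst, A)" and i: "i = Suc k" "i + 1 \<le> length eps"
    and e: "entry eps i < entry eps (i+1)" and v: "v < entry eps (i+1)"
  shows "inv eps i (s[i - 1 := v], Some (entry s i), insert i A)"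
proof -
  from I have len: "length s = length eps" and AS: "A \<subseteq> {1..k}"
    and U: "\<forall>m. 1 \<le> m \<longrightarrow> m \<le> length eps \<longrightarrow> m \<notin> A \<longrightarrow> entry s m = entry eps m"
    and J: "\<forall>j\<in>A. j + 1 \<le> length eps \<and> entry eps j < entry eps (j+1) \<and> entry s j < entry eps (j+1)"
    unfolding inv_def by auto
  have iA: "i \<notin> A" using AS i by auto
  have fin: "finite (insert i A)" using AS finite_subset by blast
  have mx: "Max (insert i A) = i"
    by (rule Max_eqI) (use fin AS i in auto)
  have si: "entry s i = entry eps i" using U iA i by auto
  have i1: "1 \<le> i" "i \<le> length s" using i len by auto
  let ?s = "s[i - 1 := v]"
  have E: "entry ?s m = (if m = i then v else entry s m)" if "1 \<le> m" for m
    using entry_upd[OF that i1] .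
  have c1: "length ?s = length eps" using len by simp
  have c2: "insert i A \<subseteq> {1..i}" using AS i by auto
  have c3: "\<forall>m. 1 \<le> m \<longrightarrow> m \<le> length eps \<longrightarrow> m \<notin> insert i A \<longrightarrow> entry ?s m = entry eps m"
    using U E by simp
  have c4: "\<forall>j\<in>insert i A. j + 1 \<le> length eps \<and> entry eps j < entry eps (j+1) \<and> entry ?s j < entry eps (j+1)"
  proof
    fix j assume j: "j \<in> insert i A"
    show "j + 1 \<le> length eps \<and> entry eps j < entry eps (j+1) \<and> entry ?s j < entry eps (j+1)"
    proof (cases "j = i")
      case True
      then show ?thesis using E[of i] i1 i e v by simp
    next
      case False
      then have "j \<in> A" using j by simp
      moreover then have "1 \<le> j" using AS by auto
      ultimately show ?thesis using J E[of j] False by simp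
    qed
  qed
  have c5: "insert i A \<noteq> {} \<longrightarrow> Some (entry s i) = Some (entry eps (Max (insert i A)))"
    using mx si by simp
  show ?thesis unfolding inv_def using c1 c2 c3 c4 c5 by simp
qed

lemma inv_step:
  assumes I: "inv eps k st" and k: "Suc k \<le> length eps"
  shows "inv eps (Suc k) (algA_step eps (Suc k) st)"
proof -
  obtain s lst A where st: "st = (s, lst, A)" by (cases st) auto
  define i where "i = Suc k"
  from I st have len: "length s = length eps" and AS: "A \<subseteq> {1..k}"
    and U: "\<forall>m. 1 \<le> m \<longrightarrow> m \<le> length eps \<longrightarrow> m \<notin> A \<longrightarrow> entry s m = entry eps m"
    and J: "\<forall>j\<in>A. j + 1 \<le> length eps \<and> entry eps j < entry eps (j+1) \<and> entry s j < entry eps (j+1)"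
    and L: "A \<noteq> {} \<longrightarrow> lst = Some (entry eps (Max A))"
    unfolding inv_def by auto
  have fin: "finite A" using AS finite_subset by blast
  have notA: "m \<notin> A" if "m \<ge> i" for m using AS that i_def by auto
  have Ui: "entry s m = entry eps m" if "m \<ge> i" "m \<le> length eps" for m
    using U notA that i_def by auto
  show ?thesis
  proof (cases "i \<ge> 3 \<and> occurs_at pat_p eps (i - 2)")
    case True
    then have o: "i - 2 + 3 \<le> length eps" "entry eps (i-2) < entry eps (i-2+1)"
      "entry eps (i-2+2) = entry eps (i-2)" "entry eps (i-2+1) < entry eps (i-2+3)"
      using occ_p by blast+
    have e1: "i - 2 + 1 = i - 1" "i - 2 + 2 = i" "i - 2 + 3 = i + 1" "i - 1 + 1 = i" using True by auto
    have v: "entry s (i-1) < entry eps (i+1)"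
    proof (cases "i - 1 \<in> A")
      case True
      then show ?thesis using J o e1 by fastforce
    next
      case False
      have "entry s (i-1) = entry eps (i-1)" using U False o \<open>i \<ge> 3 \<and> _\<close> by auto
      then show ?thesis using o e1 by auto
    qed
    have "inv eps i (s[i - 1 := entry s (i-1)], Some (entry s i), insert i A)"
      by (rule inv_modify[OF I[unfolded st]]) (use i_def o e1 v in auto)
    then show ?thesis using True st i_def by (simp add: algA_step_def)
  next
    case nP: False
    show ?thesis
    proof (cases "i \<ge> 3 \<and> occurs_at pat_q eps (i - 2)")
      case True
      then have o: "i - 2 + 3 \<le> length eps" "entry eps (i-2) < entry eps (i-2+1)"
        "entry eps (i-2+2) = entry eps (i-2+1)" "entry eps (i-2+1) < entry eps (i-2+3)"
        using occ_q by blast+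
      have e1: "i - 2 + 1 = i - 1" "i - 2 + 2 = i" "i - 2 + 3 = i + 1" "i - 1 + 1 = i" using True by auto
      have v: "entry s (i-2) < entry eps (i+1)"
      proof (cases "i - 2 \<in> A")
        case True
        then show ?thesis using J o e1 by fastforce
      next
        case False
        have "entry s (i-2) = entry eps (i-2)" using U False o \<open>i \<ge> 3 \<and> _\<close> by auto
        then show ?thesis using o e1 by auto
      qed
      have "inv eps i (s[i - 1 := entry s (i-2)], Some (entry s i), insert i A)"
        by (rule inv_modify[OF I[unfolded st]]) (use i_def o e1 v in auto)
      then show ?thesis using True nP st i_def by (simp add: algA_step_def)
    next
      case nQ: False
      show ?thesis
      proof (cases "i \<ge> 3 \<and> (occurs_at pat_p s (i - 2) \<or> occurs_at pat_q s (i - 2))")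
        case True
        then have i3: "i \<ge> 3" by simp
        have e1: "i - 2 + 1 = i - 1" "i - 2 + 2 = i" "i - 2 + 3 = i + 1" "i - 1 + 1 = i" using i3 by auto
        have o: "i + 1 \<le> length eps" "entry s i < entry s (i+1)" "entry s (i-1) < entry s (i+1)"
          using True occ_p[of s "i-2"] occ_q[of s "i-2"] e1 len by auto
        have si: "entry s i = entry eps i" "entry s (i+1) = entry eps (i+1)"
          using Ui o by auto
        have ex: "i - 2 \<in> A \<or> i - 1 \<in> A"
        proof (rule ccontr)
          assume "\<not> ?thesis"
          then have "entry s (i-2) = entry eps (i-2)" "entry s (i-1) = entry eps (i-1)"
            using U o i3 by auto
          then have "occurs_at pat s (i-2) = occurs_at pat eps (i-2)" for pat
            by (intro occ_cong) (use len si e1 in auto)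
          then show False using True nP nQ by auto
        qed
        then have Ane: "A \<noteq> {}" by auto
        have mxle: "Max A \<le> i - 1" using AS fin Ane i_def by auto
        have mxge: "Max A \<ge> i - 2" using ex proof
          assume "i - 2 \<in> A" then show ?thesis using fin by simp
        next
          assume "i - 1 \<in> A" then have "i - 1 \<le> Max A" using fin by simp
          then show ?thesis by simp
        qed
        have v: "the lst < entry eps (i+1)"
        proof (cases "Max A = i - 1")
          case True
          then have "i - 1 \<in> A" using Max_in fin Ane by metis
          then have "entry eps (i-1) < entry eps i" using J e1 by fastforce
          then show ?thesis using L Ane True o si by auto
        next
          case False
          then have m2: "Max A = i - 2" using mxle mxge by auto
          then have "i - 2 \<in> A" using Max_in fin Ane by metis
          then have a: "entry eps (i-2) < entry eps (i-1)" using J e1 by fastforce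
          have "i - 1 \<notin> A" proof
            assume "i - 1 \<in> A" then have "i - 1 \<le> Max A" using fin by simp
            then show False using m2 i3 by simp
          qed
          then have "entry s (i-1) = entry eps (i-1)" using U o i3 by auto
          then show ?thesis using L Ane m2 a o si by auto
        qed
        have "inv eps i (s[i - 1 := the lst], Some (entry s i), insert i A)"
          by (rule inv_modify[OF I[unfolded st]]) (use i_def o si v in auto)
        then show ?thesis using True nP nQ st i_def by (simp add: algA_step_def)
      next
        case False
        then have "algA_step eps i st = st" using nP nQ st by (auto simp: algA_step_def)
        then show ?thesis using I i_def unfolding st inv_def by auto
      qed
    qed
  qed
qed

lemma inv_run:
  assumes "k \<le> length eps"
  shows "inv eps k (fold (algA_step eps) [1..<k+1] (eps, None, {}))"
  using assms
proof (induction k)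
  case 0
  then show ?case by (simp add: inv_def)
next
  case (Suc k)
  then show ?case using inv_step[of eps k] by simp
qed

theorem lemma4:
  fixes eps :: "nat list" and i :: nat
  assumes "inversion_seq eps"
    and "i \<in> algA_assigned eps"
  shows "i + 1 \<le> length eps \<and> entry eps i < entry eps (i + 1)
         \<and> entry (algA eps) i < entry eps (i + 1)"
proof -
  have "inv eps (length eps) (algA_run eps)"
    unfolding algA_run_def by (rule inv_run) simp
  then show ?thesis using assms(2) unfolding algA_assigned_def algA_def inv_def
    by (cases "algA_run eps") auto
qed

end
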